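(* Let $S=\{x_1,\ldots,x_n\}$ be a factor-closed set of $n$ distinct positive integers. Let $m\ge1$, $\boldsymbol k=(k_1,\ldots,k_m)\in\mathbb{N}^m$, $|\boldsymbol k|:=k_1+\cdots+k_m$, and let $F(\boldsymbol r;\boldsymbol n_1,\ldots,\boldsymbol n_m)$ be even $\pmod{\boldsymbol r^{(\boldsymbol k)}}$. Define the $(m+|\boldsymbol k|)$-dimensional matrix $B$ of order $n$ by \[ B(i_1,\ldots,i_{m+|\boldsymbol k|}):=F\bigl(x_{i_1},\ldots,x_{i_m};\,\underbrace{x_{i_{m+1}},\ldots,x_{i_{m+k_1}}}_{k_1},\ldots,\underbrace{x_{i_{m+k_1+\cdots+k_{m-1}+1}},\ldots,x_{i_{m+|\boldsymbol k|}}}_{k_m}\bigr). \] Let $I\subseteq\{1,\ldots,m+|\boldsymbol k|\}$ have even cardinality and satisfy $\{m+1,\ldots,m+|\boldsymbol k|\}\subseteq I$; put $\varepsilon_j=1$ if $j\in I$ and $0$ otherwise, and let $\widetilde I:=\{j\in\{1,\ldots,m\}:\varepsilon_j+k_j\text{ is odd}\}$. Then \[ \det_IB=(x_1\cdots x_n)^{|\boldsymbol k|}\,\det_{\widetilde I}\Bigl(\alpha_{(x_{i_1},\ldots,x_{i_m})}\bigl(\underbrace{x_{i_1},\ldots,x_{i_1}}_{k_1},\ldots,\underbrace{x_{i_m},\ldots,x_{i_m}}_{k_m}\bigr)\Bigr)_{1\le i_1,\ldots,i_m\le n}. \]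
   Context: A set $S$ of positive integers is factor-closed if every positive divisor of every element of $S$ lies in $S$. $c(k,n):=\sum_{d\mid\gcd(k,n)}\mu(k/d)\,d$ is the Ramanujan sum. For $\boldsymbol r=(r_1,\ldots,r_m)\in\mathbb{N}^m$, variables are grouped as $\boldsymbol n_j\in\mathbb{N}^{k_j}$; for $\boldsymbol n=(n_1,\ldots,n_t)\in\mathbb{N}^t$ and $r\in\mathbb{N}$ write $\gcd(\boldsymbol n,r):=(\gcd(n_1,r),\ldots,\gcd(n_t,r))$, write $\boldsymbol n\mid r$ if $n_i\mid r$ for all $i$, and then $r/\boldsymbol n:=(r/n_1,\ldots,r/n_t)$; for $\boldsymbol a,\boldsymbol b\in\mathbb{N}^t$, $c(\boldsymbol a,\boldsymbol b):=\prod_{i=1}^tc(a_i,b_i)$. A family of functions $F(\boldsymbol r;\boldsymbol n_1,\ldots,\boldsymbol n_m)\in\mathbb{C}$, indexed by $\boldsymbol r\in\mathbb{N}^m$, of the $|\boldsymbol k|$ variables $\boldsymbol n_j\in\mathbb{N}^{k_j}$, is even $\pmod{\boldsymbol r^{(\boldsymbol k)}}$ if $F(\boldsymbol r;\gcd(\boldsymbol n_1,r_1),\ldots,\gcd(\boldsymbol n_m,r_m))=F(\boldsymbol r;\boldsymbol n_1,\ldots,\boldsymbol n_m)$ for all $\boldsymbol r$ and all arguments. Its finite Fourier coefficients are, for $\boldsymbol d_j\in\mathbb{N}^{k_j}$ with $\boldsymbol d_j\mid r_j$, \[ \alpha_{\boldsymbol r}(\boldsymbol d_1,\ldots,\boldsymbol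 d_m):=\frac{1}{r_1^{k_1}\cdots r_m^{k_m}}\sum_{\substack{\boldsymbol\delta_j\in\mathbb{N}^{k_j},\ \boldsymbol\delta_j\mid r_j\\ (j=1,\ldots,m)}}F(\boldsymbol r;\boldsymbol\delta_1,\ldots,\boldsymbol\delta_m)\prod_{j=1}^mc\Bigl(\frac{r_j}{\boldsymbol\delta_j},\frac{r_j}{\boldsymbol d_j}\Bigr). \] Hyperdeterminant: for a $K$-dimensional matrix $A$ of order $n$ and $J\subseteq\{1,\ldots,K\}$, with $\eta_j=1$ if $j\in J$ and $0$ otherwise, $\det_JA:=\frac{1}{n!}\sum_{\sigma_1,\ldots,\sigma_K\in\mathfrak{S}_n}\prod_{j=1}^K\mathrm{sgn}(\sigma_j)^{\eta_j}\prod_{v=1}^nA(\sigma_1(v),\ldots,\sigma_K(v))$, where $\mathfrak{S}_n$ is the symmetric group on $\{1,\ldots,n\}$. *)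

theory Defs
  imports "HOL-Analysis.Analysis" "HOL-Combinatorics.Permutations"
    "HOL-Computational_Algebra.Squarefree"
begin

definition moebius_mu :: "nat \<Rightarrow> int" where
  "moebius_mu n = (if n = 0 then 0 else if squarefree n then (-1) ^ card (prime_factors n) else 0)"

definition ramanujan_sum :: "nat \<Rightarrow> nat \<Rightarrow> int" where
  "ramanujan_sum k n = (\<Sum>d\<in>{d. d dvd gcd k n}. moebius_mu (k div d) * int d)"

definition factor_closed :: "nat set \<Rightarrow> bool" where
  "factor_closed S \<longleftrightarrow> (\<forall>s\<in>S. \<forall>d. d > 0 \<and> d dvd s \<longrightarrow> d \<in> S)"

definition shaped :: "nat list \<Rightarrow> 'a list list \<Rightarrow> bool" where
  "shaped k ns \<longleftrightarrow> length ns = length k \<and> (\<forall>j<length k. length (ns ! j) = k ! j)"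

(* F is even (mod r^(k)); F r ns with r = (r_1,...,r_m), ns = (n_1,...,n_m) *)
definition even_mod :: "nat list \<Rightarrow> (nat list \<Rightarrow> nat list list \<Rightarrow> complex) \<Rightarrow> bool" where
  "even_mod k F \<longleftrightarrow>
     (\<forall>r ns. length r = length k \<and> (\<forall>a\<in>set r. a > 0) \<and> shaped k ns \<and>
        (\<forall>g\<in>set ns. \<forall>a\<in>set g. a > 0) \<longrightarrow>
        F r (map2 (\<lambda>rj nj. map (\<lambda>a. gcd a rj) nj) r ns) = F r ns)"

definition fourier_coeff ::
  "nat list \<Rightarrow> (nat list \<Rightarrow> nat list list \<Rightarrow> complex) \<Rightarrow> nat list \<Rightarrow> nat list list \<Rightarrow> complex" where
  "fourier_coeff k F r ds =
     (1 / (\<Prod>j<length k. of_nat (r ! j) ^ (k ! j))) *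
     (\<Sum>\<delta>s\<in>{\<delta>s. shaped k \<delta>s \<and> (\<forall>j<length k. \<forall>l<k ! j. \<delta>s ! j ! l dvd r ! j)}.
        F r \<delta>s *
        (\<Prod>j<length k. \<Prod>l<k ! j.
           of_int (ramanujan_sum (r ! j div (\<delta>s ! j ! l)) (r ! j div (ds ! j ! l)))))"

(* hyperdeterminant det_J A of a K-dimensional matrix A of order n; indices 0-based:
   A takes index lists of length K with entries in {0..<n}, J \<subseteq> {0..<K} *)
definition hyperdet :: "nat \<Rightarrow> nat \<Rightarrow> nat set \<Rightarrow> (nat list \<Rightarrow> complex) \<Rightarrow> complex" where
  "hyperdet K n J A =
     (1 / of_nat (fact n)) *
     (\<Sum>\<sigma>s\<in>{\<sigma>s. length \<sigma>s = K \<and> (\<forall>\<sigma>\<in>set \<sigma>s. \<sigma> permutes {..<n})}.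
        (\<Prod>j<K. if j \<in> J then of_int (sign (\<sigma>s ! j)) else 1) *
        (\<Prod>v<n. A (map (\<lambda>\<sigma>. \<sigma> v) \<sigma>s)))"

fun group_by :: "nat list \<Rightarrow> 'a list \<Rightarrow> 'a list list" where
  "group_by [] xs = []"
| "group_by (k # ks) xs = take k xs # group_by ks (drop k xs)"

end

theory Submission
  imports Defs
begin


lemma mu_1[simp]: "moebius_mu 1 = 1"
  by (simp add: moebius_mu_def)

lemma mu_Suc0[simp]: "moebius_mu (Suc 0) = 1"
  by (simp add: moebius_mu_def)

lemma mu_sq: "p * p dvd d \<Longrightarrow> prime p \<Longrightarrow> moebius_mu d = 0"
  unfolding moebius_mu_def
  using squarefreeD[of d p] not_prime_unit[of p] by (auto simp: power2_eq_square)

lemma mu_prime_mult: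
  assumes p: "prime p" and nd: "\<not> p dvd d" and d: "d > 0"
  shows "moebius_mu (p * d) = - moebius_mu d"
proof -
  have cop: "coprime p d" using p nd by (simp add: prime_imp_coprime)
  have sq: "squarefree (p * d) \<longleftrightarrow> squarefree d"
    using squarefree_mult_coprime[OF cop] squarefree_prime[OF p] squarefree_multD(2)
    by blast
  have pf: "prime_factors (p * d) = insert p (prime_factors d)"
    using p d by (simp add: prime_factors_product prime_prime_factors)
  have pn: "p \<notin> prime_factors d" using nd by auto
  show ?thesis using d p sq pf pn
    by (auto simp: moebius_mu_def)
qed

lemma sum_mu:
  assumes n: "n > (0::nat)"
  shows "(\<Sum>d\<in>{d. d dvd n}. moebius_mu d) = (if n = 1 then 1 else 0)"
proof (cases "n = 1")
  case True then show ?thesis by simp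
next
  case False
  then obtain p where p: "prime p" "p dvd n" using n prime_factor_nat by blast
  then obtain m where m: "n = p * m" by blast
  have m0: "m > 0" using m n by simp
  have fin: "finite {d. d dvd n}" using n by simp
  have split: "(\<Sum>d\<in>{d. d dvd n}. moebius_mu d) =
     (\<Sum>d\<in>{d. d dvd n \<and> \<not> p dvd d}. moebius_mu d) + (\<Sum>d\<in>{d. d dvd n \<and> p dvd d}. moebius_mu d)"
    using fin by (subst sum.union_disjoint[symmetric]) (auto intro: sum.cong finite_subset)
  have A: "{d. d dvd n \<and> \<not> p dvd d} = {e. e dvd m \<and> \<not> p dvd e}"
  proof -
    have "d dvd m" if "d dvd p * m" "\<not> p dvd d" for d
      using that p by (metis coprime_commute coprime_dvd_mult_right_iff prime_imp_coprime)
    then show ?thesis using m by auto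
  qed
  have B: "{d. d dvd n \<and> p dvd d} = (\<lambda>e. p * e) ` {e. e dvd m}"
    using m p by (auto simp: image_iff)
  have inj: "inj_on (\<lambda>e. p * e) {e. e dvd m}" using p by (auto simp: inj_on_def prime_gt_0_nat)
  have "(\<Sum>d\<in>{d. d dvd n \<and> p dvd d}. moebius_mu d) = (\<Sum>e\<in>{e. e dvd m}. moebius_mu (p * e))"
    unfolding B by (simp add: sum.reindex[OF inj])
  also have "\<dots> = (\<Sum>e\<in>{e. e dvd m}. if p dvd e then 0 else - moebius_mu e)"
  proof (rule sum.cong)
    fix e assume e: "e \<in> {e. e dvd m}"
    then have e0: "e > 0" using m0 by (auto intro: Nat.gr0I)
    show "moebius_mu (p * e) = (if p dvd e then 0 else - moebius_mu e)"
    proof (cases "p dvd e")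
      case True then show ?thesis using mu_sq[OF _ p(1), of "p*e"] by auto
    next
      case False then show ?thesis using mu_prime_mult[OF p(1) False e0] by simp
    qed
  qed simp
  also have "\<dots> = - (\<Sum>e\<in>{e. e dvd m \<and> \<not> p dvd e}. moebius_mu e)"
    using m0 by (simp add: sum.If_cases sum_negf Collect_conj_eq Int_commute) (rule sum.cong, auto)
  finally show ?thesis using split A False by simp
qed



lemma sum_divisors_restrict:
  fixes f :: "nat \<Rightarrow> 'a::comm_monoid_add"
  assumes "t dvd u" "u > 0"
  shows "(\<Sum>t'\<in>{t'. t' dvd t}. f t') = (\<Sum>t'\<in>{t'. t' dvd u}. if t' dvd t then f t' else 0)"
  using assms by (intro sum.mono_neutral_cong_left) (auto intro: dvd_trans)

lemma sum_mu_between: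
  assumes u: "u > 0" and t': "t' dvd u"
  shows "(\<Sum>t\<in>{t. t dvd u}. if t' dvd t then (of_int (moebius_mu (t div t')) :: 'a::comm_ring_1) else 0)
         = (if t' = u then 1 else 0)"
proof -
  have t'0: "t' > 0" using u t' by (auto intro: Nat.gr0I)
  obtain w where w: "u = t' * w" using t' by blast
  have w0: "w > 0" using w u by simp
  have "(\<Sum>t\<in>{t. t dvd u}. if t' dvd t then (of_int (moebius_mu (t div t')) :: 'a) else 0)
      = (\<Sum>t\<in>{t. t dvd u \<and> t' dvd t}. of_int (moebius_mu (t div t')))"
    using u by (simp add: sum.If_cases Collect_conj_eq Int_commute)
  also have "{t. t dvd u \<and> t' dvd t} = (\<lambda>e. t' * e) ` {e. e dvd w}"
    using w t'0 by (auto simp: image_iff)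
  also have "(\<Sum>t\<in>(\<lambda>e. t' * e) ` {e. e dvd w}. (of_int (moebius_mu (t div t')) :: 'a))
        = (\<Sum>e\<in>{e. e dvd w}. of_int (moebius_mu e))"
    using t'0 by (subst sum.reindex) (auto simp: inj_on_def)
  also have "\<dots> = of_int (\<Sum>e\<in>{e. e dvd w}. moebius_mu e)" by simp
  also have "\<dots> = (if t' = u then 1 else 0)"
    using sum_mu[OF w0] w t'0 by auto
  finally show ?thesis .
qed

lemma mobius_inversion:
  fixes h :: "nat \<Rightarrow> 'a::comm_ring_1"
  assumes u: "u > 0"
  shows "(\<Sum>t\<in>{t. t dvd u}. \<Sum>t'\<in>{t'. t' dvd t}. of_int (moebius_mu (t div t')) * h t') = h u"
proof -
  have fin: "finite {t. t dvd u}" using u by simp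
  have "(\<Sum>t\<in>{t. t dvd u}. \<Sum>t'\<in>{t'. t' dvd t}. of_int (moebius_mu (t div t')) * h t')
      = (\<Sum>t\<in>{t. t dvd u}. \<Sum>t'\<in>{t'. t' dvd u}. if t' dvd t then of_int (moebius_mu (t div t')) * h t' else 0)"
    by (rule sum.cong[OF refl], rule sum_divisors_restrict) (use u in auto)
  also have "\<dots> = (\<Sum>t'\<in>{t'. t' dvd u}. \<Sum>t\<in>{t. t dvd u}. if t' dvd t then of_int (moebius_mu (t div t')) * h t' else 0)"
    by (rule sum.swap)
  also have "\<dots> = (\<Sum>t'\<in>{t'. t' dvd u}. h t' * (\<Sum>t\<in>{t. t dvd u}. if t' dvd t then of_int (moebius_mu (t div t')) else 0))"
    by (rule sum.cong[OF refl]) (simp add: sum_distrib_left if_distrib mult.commute cong: if_cong)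
  also have "\<dots> = (\<Sum>t'\<in>{t'. t' dvd u}. h t' * (if t' = u then 1 else 0))"
    by (rule sum.cong[OF refl]) (simp add: sum_mu_between[OF u])
  also have "\<dots> = h u" using fin by (simp add: if_distrib cong: if_cong) 
  finally show ?thesis .
qed


lemma div_perm_id:
  fixes x :: "nat \<Rightarrow> nat"
  assumes inj: "inj_on x {..<n}" and pos: "\<forall>i<n. x i > 0"
    and p: "\<psi> permutes {..<n}" and d: "\<forall>w<n. x w dvd x (\<psi> w)"
  shows "\<psi> = id"
proof -
  have le: "\<forall>w\<in>{..<n}. x w \<le> x (\<psi> w)"
  proof
    fix w assume w: "w \<in> {..<n}"
    then have "\<psi> w < n" using permutes_in_image[OF p] by auto
    then show "x w \<le> x (\<psi> w)" using d pos w by (auto intro: dvd_imp_le)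
  qed
  have eqs: "sum x {..<n} = sum (x \<circ> \<psi>) {..<n}" by (rule sum.permute[OF p])
  have eq: "\<forall>w<n. x w = x (\<psi> w)"
  proof (rule ccontr)
    assume "\<not> ?thesis"
    then obtain a where "a < n" "x a \<noteq> x (\<psi> a)" by blast
    with le have "\<exists>a\<in>{..<n}. x a < x (\<psi> a)" by force
    then have "sum x {..<n} < sum (x \<circ> \<psi>) {..<n}"
      using le by (intro sum_strict_mono_ex1) auto
    with eqs show False by simp
  qed
  show ?thesis
  proof
    fix w show "\<psi> w = id w"
    proof (cases "w < n")
      case True
      then have "\<psi> w < n" using permutes_in_image[OF p] by auto
      with True eq inj show ?thesis by (auto simp: inj_on_def)
    next
      case False then show ?thesis using permutes_not_in[OF p] by auto
    qed
  qed
qed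

lemma div_perm_eq:
  fixes x :: "nat \<Rightarrow> nat"
  assumes inj: "inj_on x {..<n}" and pos: "\<forall>i<n. x i > 0"
    and a: "\<alpha> permutes {..<n}" and b: "\<beta> permutes {..<n}"
    and d: "\<forall>v<n. x (\<alpha> v) dvd x (\<beta> v)"
  shows "\<alpha> = \<beta>"
proof -
  let ?\<psi> = "\<beta> \<circ> inv \<alpha>"
  have p: "?\<psi> permutes {..<n}" using a b by (simp add: permutes_compose permutes_inv)
  have "\<forall>w<n. x w dvd x (?\<psi> w)"
  proof (intro allI impI)
    fix w assume w: "w < n"
    then have "inv \<alpha> w < n" using permutes_in_image[OF permutes_inv[OF a]] by auto
    with d have "x (\<alpha> (inv \<alpha> w)) dvd x (\<beta> (inv \<alpha> w))" by blast
    then show "x w dvd x (?\<psi> w)" by (simp add: permutes_inverses[OF a])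
  qed
  from div_perm_id[OF inj pos p this] have "\<beta> \<circ> inv \<alpha> = id" .
  then have "\<beta> \<circ> inv \<alpha> \<circ> \<alpha> = \<alpha>" by simp
  then show ?thesis by (simp add: o_assoc[symmetric] permutes_inv_o[OF a])
qed

lemma perm_sum_repeated_row:
  fixes M :: "nat \<Rightarrow> nat \<Rightarrow> complex"
  assumes ab: "a < n" "b < n" "a \<noteq> b" and t: "\<tau> a = \<tau> b"
  shows "(\<Sum>\<pi>\<in>{\<pi>. \<pi> permutes {..<n}}. of_int (sign \<pi>) * (\<Prod>v<n. M (\<tau> v) (\<pi> v))) = 0"
proof -
  let ?T = "Transposition.transpose a b"
  have T: "?T permutes {..<n}" using ab by (simp add: permutes_swap_id)
  let ?f = "\<lambda>\<pi>. of_int (sign \<pi>) * (\<Prod>v<n. M (\<tau> v) (\<pi> v))"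
  have "sum ?f {\<pi>. \<pi> permutes {..<n}} = sum (\<lambda>\<pi>. ?f (\<pi> \<circ> ?T)) {\<pi>. \<pi> permutes {..<n}}"
    by (rule sum_permutations_compose_right[OF T])
  also have "\<dots> = sum (\<lambda>\<pi>. - ?f \<pi>) {\<pi>. \<pi> permutes {..<n}}"
  proof (rule sum.cong[OF refl])
    fix \<pi> assume "\<pi> \<in> {\<pi>. \<pi> permutes {..<n}}"
    then have p: "\<pi> permutes {..<n}" by simp
    have s: "sign (\<pi> \<circ> ?T) = - sign \<pi>"
    proof -
      have "permutation \<pi>" "permutation ?T" using p T finite_lessThan permutation_permutes by blast+
      then show ?thesis using ab by (simp add: sign_compose sign_swap_id)
    qed
    have "(\<Prod>v<n. M (\<tau> v) ((\<pi> \<circ> ?T) v)) = (\<Prod>v<n. M (\<tau> (?T v)) ((\<pi> \<circ> ?T) v))"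
      using t by (intro prod.cong) (auto simp: Transposition.transpose_def)
    also have "\<dots> = (\<Prod>v<n. M (\<tau> v) (\<pi> v))"
      using prod.permute[OF T, of "\<lambda>v. M (\<tau> v) (\<pi> v)"] by (simp add: o_def)
    finally show "?f (\<pi> \<circ> ?T) = - ?f \<pi>" using s by simp
  qed
  also have "\<dots> = - sum ?f {\<pi>. \<pi> permutes {..<n}}" by (simp add: sum_negf)
  finally show ?thesis by simp
qed


definition mtop :: "nat \<Rightarrow> (nat \<Rightarrow> complex) \<Rightarrow> complex" where
  "mtop r h = (\<Sum>d\<in>{d. d dvd r}. of_int (moebius_mu (r div d)) * h d)"

lemma mtop_inversion: "u > 0 \<Longrightarrow> (\<Sum>t\<in>{t. t dvd u}. mtop t h) = h u"
  unfolding mtop_def by (rule mobius_inversion)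

lemma divisors_in_image:
  fixes x :: "nat \<Rightarrow> nat"
  assumes fc: "factor_closed (x ` {..<n})" and r: "r \<in> x ` {..<n}" and r0: "r > 0"
  shows "{t. t dvd r} = x ` {j. j < n \<and> x j dvd r}"
proof
  show "{t. t dvd r} \<subseteq> x ` {j. j < n \<and> x j dvd r}"
  proof
    fix t assume "t \<in> {t. t dvd r}"
    then have t: "t dvd r" by simp
    then have "t > 0" using r0 by (auto intro: Nat.gr0I)
    then have "t \<in> x ` {..<n}" using fc r t unfolding factor_closed_def by blast
    then show "t \<in> x ` {j. j < n \<and> x j dvd r}" using t by auto
  qed
qed auto

lemma one_coord:
  fixes x :: "nat \<Rightarrow> nat" and h :: "nat \<Rightarrow> nat \<Rightarrow> complex"
  assumes inj: "inj_on x {..<n}" and pos: "\<forall>i<n. x i > 0"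
    and fc: "factor_closed (x ` {..<n})"
    and \<rho>: "\<rho> permutes {..<n}"
    and ev: "\<forall>v<n. \<forall>w>0. h v w = h v (gcd w (x (\<rho> v)))"
  shows "(\<Sum>\<pi>\<in>{\<pi>. \<pi> permutes {..<n}}. of_int (sign \<pi>) * (\<Prod>v<n. h v (x (\<pi> v))))
         = of_int (sign \<rho>) * (\<Prod>v<n. mtop (x (\<rho> v)) (h v))"
proof -
  define J where "J v = {j. j < n \<and> x j dvd x (\<rho> v)}" for v
  define g where "g v j = mtop (x j) (h v)" for v j
  define ind where "ind i j = (if x i dvd x j then 1 else 0 :: complex)" for i j
  have finJ: "finite (J v)" for v unfolding J_def by simp
  have \<rho>n: "\<rho> v < n" if "v < n" for v using that permutes_in_image[OF \<rho>] by auto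
  have step1: "h v (x w) = (\<Sum>j\<in>J v. g v j * ind j w)" if v: "v < n" and w: "w < n" for v w
  proof -
    define r where "r = x (\<rho> v)"
    have r0: "r > 0" using pos \<rho>n[OF v] r_def by simp
    have rS: "r \<in> x ` {..<n}" using \<rho>n[OF v] r_def by simp
    define u where "u = gcd (x w) r"
    have u0: "u > 0" using r0 u_def by simp
    have "h v (x w) = h v u" unfolding u_def r_def using ev v pos w by blast
    also have "\<dots> = (\<Sum>t\<in>{t. t dvd u}. mtop t (h v))" using mtop_inversion[OF u0] by simp
    also have "\<dots> = (\<Sum>t\<in>{t. t dvd r}. if t dvd u then mtop t (h v) else 0)"
      using r0 u_def by (intro sum_divisors_restrict) auto
    also have "\<dots> = (\<Sum>t\<in>{t. t dvd r}. mtop t (h v) * (if t dvd x w then 1 else 0))"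
      using u_def by (intro sum.cong) auto
    also have "\<dots> = (\<Sum>t\<in>x ` J v. mtop t (h v) * (if t dvd x w then 1 else 0))"
      using divisors_in_image[OF fc rS r0] J_def r_def by simp
    also have "\<dots> = (\<Sum>j\<in>J v. g v j * ind j w)"
      by (subst sum.reindex) (auto simp: g_def ind_def J_def intro: inj_on_subset[OF inj])
    finally show ?thesis .
  qed
  have step2: "(\<Prod>v<n. h v (x (\<pi> v))) = (\<Sum>\<tau>\<in>PiE {..<n} J. \<Prod>v<n. g v (\<tau> v) * ind (\<tau> v) (\<pi> v))"
    if p: "\<pi> permutes {..<n}" for \<pi>
  proof -
    have "(\<Prod>v<n. h v (x (\<pi> v))) = (\<Prod>v<n. \<Sum>j\<in>J v. g v j * ind j (\<pi> v))"
      using step1 permutes_in_image[OF p] by (intro prod.cong) auto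
    also have "\<dots> = (\<Sum>\<tau>\<in>PiE {..<n} J. \<Prod>v<n. g v (\<tau> v) * ind (\<tau> v) (\<pi> v))"
      by (rule prod_sum_PiE) (auto simp: finJ)
    finally show ?thesis .
  qed
  define Q where "Q \<tau> = (\<Sum>\<pi>\<in>{\<pi>. \<pi> permutes {..<n}}. of_int (sign \<pi>) * (\<Prod>v<n. ind (\<tau> v) (\<pi> v)))" for \<tau>
  have step3: "(\<Sum>\<pi>\<in>{\<pi>. \<pi> permutes {..<n}}. of_int (sign \<pi>) * (\<Prod>v<n. h v (x (\<pi> v))))
      = (\<Sum>\<tau>\<in>PiE {..<n} J. (\<Prod>v<n. g v (\<tau> v)) * Q \<tau>)"
  proof -
    have "(\<Sum>\<pi>\<in>{\<pi>. \<pi> permutes {..<n}}. of_int (sign \<pi>) * (\<Prod>v<n. h v (x (\<pi> v))))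
       = (\<Sum>\<pi>\<in>{\<pi>. \<pi> permutes {..<n}}. \<Sum>\<tau>\<in>PiE {..<n} J. (\<Prod>v<n. g v (\<tau> v)) * (of_int (sign \<pi>) * (\<Prod>v<n. ind (\<tau> v) (\<pi> v))))"
    proof (intro sum.cong refl)
      fix \<pi> assume "\<pi> \<in> {\<pi>. \<pi> permutes {..<n}}"
      then have "(\<Prod>v<n. h v (x (\<pi> v))) = (\<Sum>\<tau>\<in>PiE {..<n} J. (\<Prod>v<n. g v (\<tau> v)) * (\<Prod>v<n. ind (\<tau> v) (\<pi> v)))"
        using step2 by (simp add: prod.distrib)
      then show "of_int (sign \<pi>) * (\<Prod>v<n. h v (x (\<pi> v))) = (\<Sum>\<tau>\<in>PiE {..<n} J. (\<Prod>v<n. g v (\<tau> v)) * (of_int (sign \<pi>) * (\<Prod>v<n. ind (\<tau> v) (\<pi> v))))"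
        by (simp add: sum_distrib_left mult.left_commute)
    qed
    also have "\<dots> = (\<Sum>\<tau>\<in>PiE {..<n} J. \<Sum>\<pi>\<in>{\<pi>. \<pi> permutes {..<n}}. (\<Prod>v<n. g v (\<tau> v)) * (of_int (sign \<pi>) * (\<Prod>v<n. ind (\<tau> v) (\<pi> v))))"
      by (rule sum.swap)
    also have "\<dots> = (\<Sum>\<tau>\<in>PiE {..<n} J. (\<Prod>v<n. g v (\<tau> v)) * Q \<tau>)"
      by (simp add: Q_def sum_distrib_left)
    finally show ?thesis .
  qed
  have rPi: "restrict \<rho> {..<n} \<in> PiE {..<n} J" using \<rho>n by (auto simp: J_def)
  have step4: "Q \<tau> = (if \<tau> = restrict \<rho> {..<n} then of_int (sign \<rho>) else 0)"
    if \<tau>: "\<tau> \<in> PiE {..<n} J" for \<tau>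
  proof (cases "\<tau> = restrict \<rho> {..<n}")
    case True
    have "Q \<tau> = (\<Sum>\<pi>\<in>{\<pi>. \<pi> permutes {..<n}}. if \<pi> = \<rho> then of_int (sign \<rho>) else 0)"
      unfolding Q_def
    proof (intro sum.cong refl)
      fix \<pi> assume "\<pi> \<in> {\<pi>. \<pi> permutes {..<n}}"
      then have p: "\<pi> permutes {..<n}" by simp
      show "of_int (sign \<pi>) * (\<Prod>v<n. ind (\<tau> v) (\<pi> v)) = (if \<pi> = \<rho> then of_int (sign \<rho>) else 0)"
      proof (cases "\<forall>v<n. x (\<rho> v) dvd x (\<pi> v)")
        case True
        then have "\<rho> = \<pi>" using div_perm_eq[OF inj pos \<rho> p] by blast
        then show ?thesis using \<open>\<tau> = restrict \<rho> {..<n}\<close> by (simp add: ind_def)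
      next
        case False
        then obtain v where v: "v < n" "\<not> x (\<rho> v) dvd x (\<pi> v)" by blast
        then have "\<pi> \<noteq> \<rho>" by auto
        moreover have "(\<Prod>v<n. ind (\<tau> v) (\<pi> v)) = 0"
          using v \<open>\<tau> = restrict \<rho> {..<n}\<close> by (intro prod_zero) (auto simp: ind_def)
        ultimately show ?thesis by simp
      qed
    qed
    also have "\<dots> = of_int (sign \<rho>)" using sum.delta[OF finite_permutations[OF finite_lessThan[of n]], of \<rho> "\<lambda>_. of_int (sign \<rho>) :: complex"] \<rho> by simp
    finally show ?thesis using True by simp
  next
    case False
    show ?thesis
    proof (cases "inj_on \<tau> {..<n}")
      case True
      have sub: "\<tau> ` {..<n} \<subseteq> {..<n}" using \<tau> by (auto simp: J_def PiE_def Pi_def)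
      have img: "\<tau> ` {..<n} = {..<n}" by (rule endo_inj_surj[OF _ sub True]) simp
      define \<tau>' where "\<tau>' v = (if v < n then \<tau> v else v)" for v
      have "bij_betw \<tau> {..<n} {..<n}" using True img by (simp add: bij_betw_def)
      then have "bij_betw \<tau>' {..<n} {..<n}" by (rule bij_betw_cong[THEN iffD1, rotated]) (simp add: \<tau>'_def)
      then have t': "\<tau>' permutes {..<n}" by (rule bij_imp_permutes) (simp add: \<tau>'_def)
      have "\<forall>v<n. x (\<tau>' v) dvd x (\<rho> v)" using \<tau> by (auto simp: \<tau>'_def J_def PiE_def Pi_def)
      then have "\<tau>' = \<rho>" using div_perm_eq[OF inj pos t' \<rho>] by blast
      then have "\<forall>v<n. \<tau> v = \<rho> v" by (metis \<tau>'_def)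
      then have "\<tau> = restrict \<rho> {..<n}"
        using \<tau> by (auto simp: fun_eq_iff PiE_def extensional_def)
      with False show ?thesis by simp
    next
      case False
      then obtain a b where ab: "a < n" "b < n" "a \<noteq> b" "\<tau> a = \<tau> b" by (auto simp: inj_on_def)
      show ?thesis using perm_sum_repeated_row[OF ab, of ind] \<open>\<tau> \<noteq> restrict \<rho> {..<n}\<close>
        by (simp add: Q_def)
    qed
  qed
  have "(\<Sum>\<tau>\<in>PiE {..<n} J. (\<Prod>v<n. g v (\<tau> v)) * Q \<tau>)
      = (\<Sum>\<tau>\<in>PiE {..<n} J. if \<tau> = restrict \<rho> {..<n} then (\<Prod>v<n. g v (\<tau> v)) * of_int (sign \<rho>) else 0)"
    by (intro sum.cong refl) (simp add: step4)
  also have "\<dots> = (\<Prod>v<n. g v (restrict \<rho> {..<n} v)) * of_int (sign \<rho>)"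
    using rPi sum.delta[OF finite_PiE[of "{..<n}" J], of "restrict \<rho> {..<n}" "\<lambda>\<tau>. (\<Prod>v<n. g v (\<tau> v)) * of_int (sign \<rho>)"]
    by (simp add: finJ)
  also have "\<dots> = of_int (sign \<rho>) * (\<Prod>v<n. mtop (x (\<rho> v)) (h v))"
    by (simp add: g_def)
  finally show ?thesis using step3 by simp
qed


definition lset :: "nat \<Rightarrow> (nat \<Rightarrow> 'a set) \<Rightarrow> 'a list set" where
  "lset N S = {l. length l = N \<and> (\<forall>i<N. l ! i \<in> S i)}"

lemma lset_0[simp]: "lset 0 S = {[]}"
  by (auto simp: lset_def)

lemma lset_Suc: "lset (Suc N) S = (\<lambda>(a, l). a # l) ` (S 0 \<times> lset N (\<lambda>i. S (Suc i)))"
proof -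
  have "l \<in> (\<lambda>(a, l). a # l) ` (S 0 \<times> lset N (\<lambda>i. S (Suc i)))" if l0: "l \<in> lset (Suc N) S" for l
  proof -
    from l0 have len: "length l = Suc N" and el: "\<forall>i<Suc N. l ! i \<in> S i" by (auto simp: lset_def)
    from len obtain a l' where l: "l = a # l'" by (cases l) auto
    have "a \<in> S 0" using el l by auto
    moreover have "l' \<in> lset N (\<lambda>i. S (Suc i))"
      unfolding lset_def
    proof (intro CollectI conjI allI impI)
      show "length l' = N" using len l by simp
      fix i assume "i < N"
      then have "l ! Suc i \<in> S (Suc i)" using el by blast
      then show "l' ! i \<in> S (Suc i)" using l by simp
    qed
    ultimately show ?thesis using l by (simp add: image_iff)
  qed
  moreover have "a # l \<in> lset (Suc N) S" if a: "a \<in> S 0" and l: "l \<in> lset N (\<lambda>i. S (Suc i))" for a l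
    unfolding lset_def
  proof (intro CollectI conjI allI impI)
    show "length (a # l) = Suc N" using l by (simp add: lset_def)
    fix i assume i: "i < Suc N"
    show "(a # l) ! i \<in> S i"
    proof (cases i)
      case 0 then show ?thesis using a by simp
    next
      case (Suc j) then show ?thesis using l i by (simp add: lset_def)
    qed
  qed
  ultimately show ?thesis by (auto simp: image_iff)
qed

lemma sum_lset_Suc:
  "(\<Sum>l\<in>lset (Suc N) S. f l) = (\<Sum>a\<in>S 0. \<Sum>l\<in>lset N (\<lambda>i. S (Suc i)). f (a # l))"
proof -
  have inj: "inj_on (\<lambda>(a, l). a # l) (S 0 \<times> lset N (\<lambda>i. S (Suc i)))" by (auto simp: inj_on_def)
  have e: "f \<circ> (\<lambda>(a, l). a # l) = (\<lambda>(a,l). f (a # l))" by auto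
  show ?thesis
    unfolding lset_Suc sum.reindex[OF inj] e sum.cartesian_product ..
qed

lemma finite_lset: "(\<And>i. i < N \<Longrightarrow> finite (S i)) \<Longrightarrow> finite (lset N S)"
proof (induction N arbitrary: S)
  case 0 then show ?case by simp
next
  case (Suc N) then show ?case by (simp add: lset_Suc)
qed

definition divlists :: "nat list \<Rightarrow> nat list set" where
  "divlists rs = lset (length rs) (\<lambda>i. {d. d dvd rs ! i})"

definition mtopL :: "nat list \<Rightarrow> (nat list \<Rightarrow> complex) \<Rightarrow> complex" where
  "mtopL rs f = (\<Sum>ds\<in>divlists rs. of_int (prod_list (map2 (\<lambda>r d. moebius_mu (r div d)) rs ds)) * f ds)"

lemma mtopL_Nil[simp]: "mtopL [] f = f []"
  by (simp add: mtopL_def divlists_def)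

lemma mtopL_Cons: "mtopL (r # rs) f = mtopL rs (\<lambda>ds. mtop r (\<lambda>d. f (d # ds)))"
proof -
  have "mtopL (r # rs) f = (\<Sum>d\<in>{d. d dvd r}. \<Sum>ds\<in>divlists rs.
      of_int (moebius_mu (r div d)) * (of_int (prod_list (map2 (\<lambda>r d. moebius_mu (r div d)) rs ds)) * f (d # ds)))"
    unfolding mtopL_def divlists_def by (simp add: sum_lset_Suc mult_ac)
  also have "\<dots> = (\<Sum>ds\<in>divlists rs. \<Sum>d\<in>{d. d dvd r}.
      of_int (prod_list (map2 (\<lambda>r d. moebius_mu (r div d)) rs ds)) * (of_int (moebius_mu (r div d)) * f (d # ds)))"
    by (subst sum.swap) (simp add: mult_ac)
  also have "\<dots> = mtopL rs (\<lambda>ds. mtop r (\<lambda>d. f (d # ds)))"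
    unfolding mtopL_def mtop_def by (simp add: sum_distrib_left)
  finally show ?thesis .
qed

definition permlists :: "nat \<Rightarrow> nat \<Rightarrow> (nat \<Rightarrow> nat) list set" where
  "permlists N n = lset N (\<lambda>_. {\<pi>. \<pi> permutes {..<n}})"

lemma multi_coord:
  fixes x :: "nat \<Rightarrow> nat" and f :: "nat \<Rightarrow> nat list \<Rightarrow> complex"
  assumes inj: "inj_on x {..<n}" and pos: "\<forall>i<n. x i > 0"
    and fc: "factor_closed (x ` {..<n})"
    and as: "\<forall>a\<in>set as. a permutes {..<n}"
    and ev: "\<forall>v<n. \<forall>ws. length ws = length as \<and> (\<forall>w\<in>set ws. w > 0) \<longrightarrow>
               f v ws = f v (map2 (\<lambda>w a. gcd w (x (a v))) ws as)"
  shows "(\<Sum>\<pi>s\<in>permlists (length as) n. of_int (prod_list (map sign \<pi>s)) * (\<Prod>v<n. f v (map (\<lambda>\<pi>. x (\<pi> v)) \<pi>s)))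
         = of_int (prod_list (map sign as)) * (\<Prod>v<n. mtopL (map (\<lambda>a. x (a v)) as) (f v))"
  using as ev
proof (induction as arbitrary: f)
  case Nil
  then show ?case by (simp add: permlists_def)
next
  case (Cons a as)
  have a: "a permutes {..<n}" using Cons.prems by simp
  have an: "a v < n" if "v < n" for v using that permutes_in_image[OF a] by auto
  define f' where "f' v ws = mtop (x (a v)) (\<lambda>d. f v (d # ws))" for v ws
  have ev': "\<forall>v<n. \<forall>ws. length ws = length as \<and> (\<forall>w\<in>set ws. w > 0) \<longrightarrow>
               f' v ws = f' v (map2 (\<lambda>w a. gcd w (x (a v))) ws as)"
  proof (intro allI impI)
    fix v and ws :: "nat list" assume v: "v < n" and ws: "length ws = length as \<and> (\<forall>w\<in>set ws. w > 0)"
    have "f v (d # ws) = f v (d # map2 (\<lambda>w a. gcd w (x (a v))) ws as)" if d: "d dvd x (a v)" for d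
    proof -
      have "x (a v) > 0" using pos an[OF v] by blast
      then have d0: "d > 0" using d by (auto intro: Nat.gr0I)
      have "f v (d # ws) = f v (map2 (\<lambda>w a. gcd w (x (a v))) (d # ws) (a # as))"
        by (rule Cons.prems(2)[rule_format]) (use v ws d0 in auto)
      also have "\<dots> = f v (d # map2 (\<lambda>w a. gcd w (x (a v))) ws as)"
        using d by (simp add: gcd_nat.absorb1)
      finally show ?thesis .
    qed
    then show "f' v ws = f' v (map2 (\<lambda>w a. gcd w (x (a v))) ws as)"
      unfolding f'_def mtop_def by (intro sum.cong) auto
  qed
  have pos_rest: "\<forall>w\<in>set (map (\<lambda>\<pi>. x (\<pi> v)) \<pi>s). w > 0" if "\<pi>s \<in> permlists N n" "v < n" for \<pi>s v N
  proof -
    have "\<pi> v < n" if "\<pi> \<in> set \<pi>s" for \<pi>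
    proof -
      from that obtain i where "i < length \<pi>s" "\<pi> = \<pi>s ! i" by (auto simp: in_set_conv_nth)
      then have "\<pi> permutes {..<n}" using \<open>\<pi>s \<in> permlists N n\<close> by (auto simp: permlists_def lset_def)
      then show ?thesis using \<open>v < n\<close> permutes_in_image by fastforce
    qed
    then show ?thesis using pos by auto
  qed
  have inner: "(\<Sum>\<pi>\<in>{\<pi>. \<pi> permutes {..<n}}. of_int (sign \<pi>) * (\<Prod>v<n. f v (x (\<pi> v) # map (\<lambda>\<pi>. x (\<pi> v)) \<pi>s)))
       = of_int (sign a) * (\<Prod>v<n. f' v (map (\<lambda>\<pi>. x (\<pi> v)) \<pi>s))"
    if \<pi>s: "\<pi>s \<in> permlists (length as) n" for \<pi>s
  proof -
    have "(\<Sum>\<pi>\<in>{\<pi>. \<pi> permutes {..<n}}. of_int (sign \<pi>) * (\<Prod>v<n. (\<lambda>v w. f v (w # map (\<lambda>\<pi>. x (\<pi> v)) \<pi>s)) v (x (\<pi> v))))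
       = of_int (sign a) * (\<Prod>v<n. mtop (x (a v)) ((\<lambda>v w. f v (w # map (\<lambda>\<pi>. x (\<pi> v)) \<pi>s)) v))"
    proof (rule one_coord[OF inj pos fc a])
      show "\<forall>v<n. \<forall>w>0. f v (w # map (\<lambda>\<pi>. x (\<pi> v)) \<pi>s) = f v (gcd w (x (a v)) # map (\<lambda>\<pi>. x (\<pi> v)) \<pi>s)"
      proof (intro allI impI)
        fix v w :: nat assume v: "v < n" and w: "w > 0"
        let ?rest = "map (\<lambda>\<pi>. x (\<pi> v)) \<pi>s"
        have lr: "length ?rest = length as" using \<pi>s by (simp add: permlists_def lset_def)
        have pr: "\<forall>w\<in>set ?rest. w > 0" using pos_rest[OF \<pi>s v] .
        have g0: "gcd w (x (a v)) > 0" using w by simp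
        have "f v (w # ?rest) = f v (map2 (\<lambda>w a. gcd w (x (a v))) (w # ?rest) (a # as))"
          by (rule Cons.prems(2)[rule_format]) (use v lr pr w in auto)
        also have "\<dots> = f v (gcd w (x (a v)) # map2 (\<lambda>w a. gcd w (x (a v))) ?rest as)" by simp
        also have "\<dots> = f v (gcd w (x (a v)) # ?rest)"
        proof -
          have "f v (gcd w (x (a v)) # ?rest) = f v (map2 (\<lambda>w a. gcd w (x (a v))) (gcd w (x (a v)) # ?rest) (a # as))"
            by (rule Cons.prems(2)[rule_format]) (use v lr pr g0 in auto)
          then show ?thesis by simp
        qed
        finally show "f v (w # ?rest) = f v (gcd w (x (a v)) # ?rest)" .
      qed
    qed
    then show ?thesis by (simp add: f'_def)
  qed
  have "(\<Sum>\<pi>s\<in>permlists (length (a # as)) n. of_int (prod_list (map sign \<pi>s)) * (\<Prod>v<n. f v (map (\<lambda>\<pi>. x (\<pi> v)) \<pi>s)))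
      = (\<Sum>\<pi>\<in>{\<pi>. \<pi> permutes {..<n}}. \<Sum>\<pi>s\<in>permlists (length as) n.
           of_int (prod_list (map sign \<pi>s)) * (of_int (sign \<pi>) * (\<Prod>v<n. f v (x (\<pi> v) # map (\<lambda>\<pi>. x (\<pi> v)) \<pi>s))))"
    unfolding permlists_def by (simp add: sum_lset_Suc mult_ac)
  also have "\<dots> = (\<Sum>\<pi>s\<in>permlists (length as) n. of_int (prod_list (map sign \<pi>s)) *
        (\<Sum>\<pi>\<in>{\<pi>. \<pi> permutes {..<n}}. of_int (sign \<pi>) * (\<Prod>v<n. f v (x (\<pi> v) # map (\<lambda>\<pi>. x (\<pi> v)) \<pi>s))))"
    by (subst sum.swap) (simp add: sum_distrib_left)
  also have "\<dots> = (\<Sum>\<pi>s\<in>permlists (length as) n. of_int (sign a) * (of_int (prod_list (map sign \<pi>s)) *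
        (\<Prod>v<n. f' v (map (\<lambda>\<pi>. x (\<pi> v)) \<pi>s))))"
    by (intro sum.cong refl) (simp add: inner)
  also have "\<dots> = of_int (sign a) * (of_int (prod_list (map sign as)) * (\<Prod>v<n. mtopL (map (\<lambda>a. x (a v)) as) (f' v)))"
    using Cons.IH[of f'] Cons.prems(1) ev' by (simp add: sum_distrib_left[symmetric])
  also have "\<dots> = of_int (prod_list (map sign (a # as))) * (\<Prod>v<n. mtopL (map (\<lambda>a. x (a v)) (a # as)) (f v))"
    by (simp add: mtopL_Cons f'_def[abs_def])
  finally show ?case .
qed


lemma lset_cong: "(\<And>i. i < N \<Longrightarrow> S i = T i) \<Longrightarrow> lset N S = lset N T"
  by (auto simp: lset_def)

lemma sum_lset_add:
  "(\<Sum>l\<in>lset (M + N) S. f l) = (\<Sum>a\<in>lset M S. \<Sum>b\<in>lset N (\<lambda>i. S (M + i)). f (a @ b))"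
proof (induction M arbitrary: S f)
  case 0 then show ?case by simp
next
  case (Suc M)
  have "(\<Sum>l\<in>lset (Suc M + N) S. f l) = (\<Sum>a0\<in>S 0. \<Sum>l\<in>lset (M + N) (\<lambda>i. S (Suc i)). f (a0 # l))"
    using sum_lset_Suc[where N="M + N" and S=S and f=f] by simp
  also have "\<dots> = (\<Sum>a0\<in>S 0. \<Sum>a\<in>lset M (\<lambda>i. S (Suc i)). \<Sum>b\<in>lset N (\<lambda>i. S (Suc (M + i))). f (a0 # a @ b))"
    using Suc.IH by simp
  also have "\<dots> = (\<Sum>a\<in>lset (Suc M) S. \<Sum>b\<in>lset N (\<lambda>i. S (Suc M + i)). f (a @ b))"
    using sum_lset_Suc[where N=M and S=S and f="\<lambda>a. \<Sum>b\<in>lset N (\<lambda>i. S (Suc M + i)). f (a @ b)"] by simp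
  finally show ?case .
qed

lemma lset_length: "l \<in> lset N S \<Longrightarrow> length l = N"
  by (simp add: lset_def)

lemma group_by_append: "length a = kj \<Longrightarrow> group_by (kj # k) (a @ b) = a # group_by k b"
  by simp

lemma map2_append_eq: "length a = length c \<Longrightarrow> map2 f (a @ b) (c @ d) = map2 f a c @ map2 f b d"
  by simp

lemma ramanujan_1: "ramanujan_sum q 1 = moebius_mu q"
proof -
  have "{d. d dvd gcd q (1::nat)} = {1}" by auto
  then show ?thesis by (simp add: ramanujan_sum_def)
qed

lemma FC_link:
  fixes G :: "nat list list \<Rightarrow> complex"
  assumes "length r = length k" "\<forall>a\<in>set r. a > 0"
  shows "mtopL (concat (map2 (\<lambda>rj kj. replicate kj rj) r k)) (\<lambda>ws. G (group_by k ws))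
       = (\<Sum>\<delta>s\<in>lset (length k) (\<lambda>j. lset (k ! j) (\<lambda>_. {d. d dvd r ! j})).
            G \<delta>s * of_int (\<Prod>j<length k. \<Prod>l<k ! j. moebius_mu (r ! j div (\<delta>s ! j ! l))))"
  using assms
proof (induction k arbitrary: r G)
  case Nil then show ?case by simp
next
  case (Cons kj k)
  from Cons.prems obtain rj r' where r: "r = rj # r'" by (cases r) auto
  have lr': "length r' = length k" and pos': "\<forall>a\<in>set r'. a > 0" using Cons.prems r by auto
  let ?R1 = "replicate kj rj" and ?R' = "concat (map2 (\<lambda>rj kj. replicate kj rj) r' k)"
  let ?w = "\<lambda>R ds. of_int (prod_list (map2 (\<lambda>r d. moebius_mu (r div d)) R ds)) :: complex"
  let ?D1 = "lset kj (\<lambda>_. {d. d dvd rj})"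
  have flat: "concat (map2 (\<lambda>rj kj. replicate kj rj) r (kj # k)) = ?R1 @ ?R'" using r by simp
  have dl: "divlists (?R1 @ ?R') = lset (kj + length ?R') (\<lambda>i. {d. d dvd (?R1 @ ?R') ! i})"
    by (simp add: divlists_def)
  have "mtopL (?R1 @ ?R') (\<lambda>ws. G (group_by (kj # k) ws))
      = (\<Sum>a\<in>?D1. \<Sum>b\<in>divlists ?R'. ?w (?R1 @ ?R') (a @ b) * G (group_by (kj # k) (a @ b)))"
  proof -
    have c1: "lset kj (\<lambda>i. {d. d dvd (?R1 @ ?R') ! i}) = ?D1"
      by (rule lset_cong) (simp add: nth_append)
    have c2: "lset (length ?R') (\<lambda>i. {d. d dvd (?R1 @ ?R') ! (kj + i)}) = divlists ?R'"
      unfolding divlists_def by (rule lset_cong) (simp add: nth_append)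
    show ?thesis unfolding mtopL_def dl sum_lset_add c1 c2 ..
  qed
  also have "\<dots> = (\<Sum>a\<in>?D1. ?w ?R1 a * mtopL ?R' (\<lambda>ws. G (a # group_by k ws)))"
  proof (intro sum.cong refl)
    fix a assume a: "a \<in> ?D1"
    then have la: "length a = kj" by (rule lset_length)
    have "?w (?R1 @ ?R') (a @ b) * G (group_by (kj # k) (a @ b)) = ?w ?R1 a * (?w ?R' b * G (a # group_by k b))" for b
      using la by (simp add: map2_append_eq)
    then show "(\<Sum>b\<in>divlists ?R'. ?w (?R1 @ ?R') (a @ b) * G (group_by (kj # k) (a @ b))) = ?w ?R1 a * mtopL ?R' (\<lambda>ws. G (a # group_by k ws))"
      by (simp add: mtopL_def sum_distrib_left)
  qed
  also have "\<dots> = (\<Sum>a\<in>?D1. ?w ?R1 a * (\<Sum>\<delta>s\<in>lset (length k) (\<lambda>j. lset (k ! j) (\<lambda>_. {d. d dvd r' ! j})).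
            G (a # \<delta>s) * of_int (\<Prod>j<length k. \<Prod>l<k ! j. moebius_mu (r' ! j div (\<delta>s ! j ! l)))))"
  proof (intro sum.cong refl)
    fix a
    show "?w ?R1 a * mtopL ?R' (\<lambda>ws. G (a # group_by k ws)) = ?w ?R1 a * (\<Sum>\<delta>s\<in>lset (length k) (\<lambda>j. lset (k ! j) (\<lambda>_. {d. d dvd r' ! j})).
            G (a # \<delta>s) * of_int (\<Prod>j<length k. \<Prod>l<k ! j. moebius_mu (r' ! j div (\<delta>s ! j ! l))))"
      using Cons.IH[OF lr' pos', of "\<lambda>\<delta>s. G (a # \<delta>s)"] by simp
  qed
  also have "\<dots> = (\<Sum>\<delta>s\<in>lset (length (kj # k)) (\<lambda>j. lset ((kj # k) ! j) (\<lambda>_. {d. d dvd r ! j})).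
            G \<delta>s * of_int (\<Prod>j<length (kj # k). \<Prod>l<(kj # k) ! j. moebius_mu (r ! j div (\<delta>s ! j ! l))))"
  proof -
    have w1: "?w ?R1 a = of_int (\<Prod>l<kj. moebius_mu (rj div a ! l))" if "a \<in> ?D1" for a
    proof -
      have la: "length a = kj" using that by (rule lset_length)
      have "prod_list (map2 (\<lambda>r d. moebius_mu (r div d)) ?R1 a) = (\<Prod>l<kj. moebius_mu (rj div a ! l))"
        using la by (simp add: prod.list_conv_set_nth atLeast0LessThan)
      then show ?thesis by simp
    qed
    show ?thesis
      unfolding length_Cons sum_lset_Suc r nth_Cons_0 nth_Cons_Suc
    proof (intro sum.cong refl)
      fix a assume a: "a \<in> ?D1"
      have "(\<Sum>\<delta>s\<in>lset (length k) (\<lambda>j. lset (k ! j) (\<lambda>_. {d. d dvd r' ! j})).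
              G (a # \<delta>s) * of_int (\<Prod>j<Suc (length k). \<Prod>l<(kj # k) ! j. moebius_mu ((rj # r') ! j div ((a # \<delta>s) ! j ! l))))
          = (\<Sum>\<delta>s\<in>lset (length k) (\<lambda>j. lset (k ! j) (\<lambda>_. {d. d dvd r' ! j})).
              of_int (\<Prod>l<kj. moebius_mu (rj div a ! l)) * (G (a # \<delta>s) * of_int (\<Prod>j<length k. \<Prod>l<k ! j. moebius_mu (r' ! j div (\<delta>s ! j ! l)))))"
        by (intro sum.cong refl) (subst prod.lessThan_Suc_shift, simp del: of_int_prod)
      then show "?w ?R1 a * (\<Sum>\<delta>s\<in>lset (length k) (\<lambda>j. lset (k ! j) (\<lambda>_. {d. d dvd r' ! j})).
            G (a # \<delta>s) * of_int (\<Prod>j<length k. \<Prod>l<k ! j. moebius_mu (r' ! j div (\<delta>s ! j ! l))))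
        = (\<Sum>\<delta>s\<in>lset (length k) (\<lambda>j. lset (k ! j) (\<lambda>_. {d. d dvd r' ! j})).
              G (a # \<delta>s) * of_int (\<Prod>j<Suc (length k). \<Prod>l<(kj # k) ! j. moebius_mu ((rj # r') ! j div ((a # \<delta>s) ! j ! l))))"
        by (simp add: w1[OF a] sum_distrib_left del: of_int_prod)
    qed
  qed
  finally show ?case using flat r by simp
qed


definition anch :: "'a list \<Rightarrow> nat list \<Rightarrow> 'a list" where
  "anch \<rho>s k = concat (map2 (\<lambda>\<rho> kj. replicate kj \<rho>) \<rho>s k)"

lemma anch_Nil[simp]: "anch [] k = []" by (simp add: anch_def)
lemma anch_Cons[simp]: "anch (\<rho> # \<rho>s) (kj # k) = replicate kj \<rho> @ anch \<rho>s k" by (simp add: anch_def)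

lemma length_anch: "length \<rho>s = length k \<Longrightarrow> length (anch \<rho>s k) = sum_list k"
proof (induction k arbitrary: \<rho>s)
  case Nil then show ?case by simp
next
  case (Cons kj k) then show ?case by (cases \<rho>s) auto
qed

lemma set_anch: "set (anch \<rho>s k) \<subseteq> set \<rho>s"
  unfolding anch_def by (auto dest!: set_zip_leftD)

lemma map_anch: "map h (anch \<rho>s k) = anch (map h \<rho>s) k"
proof (induction k arbitrary: \<rho>s)
  case Nil then show ?case by (simp add: anch_def)
next
  case (Cons kj k) then show ?case by (cases \<rho>s) (auto simp: anch_def)
qed

lemma anch_conv: "anch \<rho>s k = concat (map2 (\<lambda>rj kj. replicate kj rj) \<rho>s k)"
  by (simp add: anch_def)

lemma gb_map2:
  "length \<rho>s = length k \<Longrightarrow> length ws = sum_list k \<Longrightarrow>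
   group_by k (map2 g ws (anch \<rho>s k)) = map2 (\<lambda>\<rho> nj. map (\<lambda>w. g w \<rho>) nj) \<rho>s (group_by k ws)"
proof (induction k arbitrary: \<rho>s ws)
  case Nil then show ?case by simp
next
  case (Cons kj k)
  then obtain \<rho> \<rho>s' where r: "\<rho>s = \<rho> # \<rho>s'" by (cases \<rho>s) auto
  have l': "length \<rho>s' = length k" using Cons.prems r by simp
  have lw: "length (drop kj ws) = sum_list k" using Cons.prems by simp
  have z: "zip ws (replicate kj \<rho> @ anch \<rho>s' k) = zip (take kj ws) (replicate kj \<rho>) @ zip (drop kj ws) (anch \<rho>s' k)"
    by (simp add: zip_append2)
  have lt: "length (map2 g (take kj ws) (replicate kj \<rho>)) = kj" using Cons.prems by simp
  have "group_by (kj # k) (map2 g ws (anch \<rho>s (kj # k)))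
      = group_by (kj # k) (map2 g (take kj ws) (replicate kj \<rho>) @ map2 g (drop kj ws) (anch \<rho>s' k))"
    using r z by simp
  also have "\<dots> = map2 g (take kj ws) (replicate kj \<rho>) # group_by k (map2 g (drop kj ws) (anch \<rho>s' k))"
    using lt by (simp del: group_by.simps add: group_by_append)
  also have "\<dots> = map (\<lambda>w. g w \<rho>) (take kj ws) # map2 (\<lambda>\<rho> nj. map (\<lambda>w. g w \<rho>) nj) \<rho>s' (group_by k (drop kj ws))"
    using Cons.IH[OF l' lw] Cons.prems by (simp add: zip_replicate2)
  finally show ?case using r by simp
qed

lemma shaped_gb: "length ws = sum_list k \<Longrightarrow> shaped k (group_by k ws)"
proof (induction k arbitrary: ws)
  case Nil then show ?case by (simp add: shaped_def)
next
  case (Cons kj k)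
  have "shaped k (group_by k (drop kj ws))" using Cons by simp
  then show ?case using Cons.prems by (auto simp: shaped_def nth_Cons split: nat.splits)
qed

lemma set_gb: "g \<in> set (group_by k ws) \<Longrightarrow> set g \<subseteq> set ws"
proof (induction k arbitrary: ws)
  case Nil then show ?case by simp
next
  case (Cons kj k) then show ?case by (auto dest: in_set_takeD in_set_dropD)
qed

lemma prod_sign_anch:
  "length \<rho>s = length k \<Longrightarrow> prod_list (map sign (anch \<rho>s k)) = (\<Prod>j<length k. sign (\<rho>s ! j) ^ (k ! j))"
proof (induction k arbitrary: \<rho>s)
  case Nil then show ?case by simp
next
  case (Cons kj k)
  then obtain \<rho> \<rho>s' where r: "\<rho>s = \<rho> # \<rho>s'" by (cases \<rho>s) auto
  have "(\<Prod>j<length (kj # k). sign (\<rho>s ! j) ^ ((kj # k) ! j)) = sign \<rho> ^ kj * (\<Prod>j<length k. sign (\<rho>s' ! j) ^ (k ! j))"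
    unfolding length_Cons prod.lessThan_Suc_shift using r by simp
  then show ?case using Cons.IH[of \<rho>s'] Cons.prems r by simp
qed

lemma prod_add_split: "(\<Prod>j<m + s. f j) = (\<Prod>j<m. f j) * (\<Prod>i<s. f (m + i))"
  for f :: "nat \<Rightarrow> 'a::comm_monoid_mult"
  by (induction s) (simp_all add: mult_ac)

lemma permlists_conv: "{\<sigma>s. length \<sigma>s = N \<and> (\<forall>\<sigma>\<in>set \<sigma>s. \<sigma> permutes {..<n})} = permlists N n"
  by (auto simp: permlists_def lset_def in_set_conv_nth dest: bspec[OF _ nth_mem])

lemma sum_permlists_add:
  "(\<Sum>\<sigma>s\<in>permlists (m + s) n. g \<sigma>s) = (\<Sum>\<rho>s\<in>permlists m n. \<Sum>\<pi>s\<in>permlists s n. g (\<rho>s @ \<pi>s))"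
  unfolding permlists_def by (rule sum_lset_add)

lemma sign_pm: "sign p = 1 \<or> sign p = -1"
  by (simp add: sign_def)

lemma sign_combine:
  fixes sg :: int
  assumes "sg = 1 \<or> sg = -1"
  shows "(if b then sg else 1) * sg ^ kj = (if odd ((if b then 1 else 0) + kj) then sg else 1)"
proof -
  have p: "sg ^ kj = (if even kj then 1 else sg)"
    using assms by (auto simp: power_0_left)
  then show ?thesis using assms by auto
qed

lemma FC_eq:
  fixes F :: "nat list \<Rightarrow> nat list list \<Rightarrow> complex"
  assumes lr: "length r = length k" and pos: "\<forall>a\<in>set r. a > 0"
  shows "(\<Sum>\<delta>s\<in>lset (length k) (\<lambda>j. lset (k ! j) (\<lambda>_. {d. d dvd r ! j})).
            F r \<delta>s * of_int (\<Prod>j<length k. \<Prod>l<k ! j. moebius_mu (r ! j div (\<delta>s ! j ! l))))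
       = of_nat (\<Prod>j<length k. r ! j ^ (k ! j)) * fourier_coeff k F r (map2 (\<lambda>rj kj. replicate kj rj) r k)"
proof -
  let ?Sh = "lset (length k) (\<lambda>j. lset (k ! j) (\<lambda>_. {d. d dvd r ! j}))"
  have set: "{\<delta>s. shaped k \<delta>s \<and> (\<forall>j<length k. \<forall>l<k ! j. \<delta>s ! j ! l dvd r ! j)} = ?Sh"
    by (auto simp: shaped_def lset_def)
  have rj: "r ! j > 0" if "j < length k" for j using pos lr that by auto
  have trm: "F r \<delta>s * (\<Prod>j<length k. \<Prod>l<k ! j.
           of_int (ramanujan_sum (r ! j div (\<delta>s ! j ! l)) (r ! j div (map2 (\<lambda>rj kj. replicate kj rj) r k ! j ! l))))
      = F r \<delta>s * of_int (\<Prod>j<length k. \<Prod>l<k ! j. moebius_mu (r ! j div (\<delta>s ! j ! l)))" for \<delta>s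
  proof -
    have "(\<Prod>j<length k. \<Prod>l<k ! j.
           (of_int (ramanujan_sum (r ! j div (\<delta>s ! j ! l)) (r ! j div (map2 (\<lambda>rj kj. replicate kj rj) r k ! j ! l))) :: complex))
        = (\<Prod>j<length k. \<Prod>l<k ! j. of_int (moebius_mu (r ! j div (\<delta>s ! j ! l))))"
      using lr rj by (intro prod.cong refl) (simp add: ramanujan_1[simplified])
    then show ?thesis by simp
  qed
  have nz: "(\<Prod>j<length k. (of_nat (r ! j) :: complex) ^ (k ! j)) \<noteq> 0"
    using rj by (simp add: prod_zero_iff)
  show ?thesis
    unfolding fourier_coeff_def set trm using nz by simp
qed


theorem proposition4p4:
  fixes x :: "nat \<Rightarrow> nat" and n :: nat and k :: "nat list"
    and F :: "nat list \<Rightarrow> nat list list \<Rightarrow> complex" and I :: "nat set"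
  assumes inj: "inj_on x {..<n}"
    and pos: "\<forall>i<n. x i > 0"
    and fc: "factor_closed (x ` {..<n})"
    and m_pos: "length k \<ge> 1"
    and k_pos: "\<forall>j\<in>set k. j \<ge> 1"
    and ev: "even_mod k F"
    and I_sub: "I \<subseteq> {..<length k + sum_list k}"
    and I_even: "even (card I)"
    and I_sup: "{length k..<length k + sum_list k} \<subseteq> I"
  shows "hyperdet (length k + sum_list k) n I
           (\<lambda>idx. F (map x (take (length k) idx)) (group_by k (map x (drop (length k) idx))))
         = of_nat (\<Prod>i<n. x i) ^ sum_list k *
           hyperdet (length k) n {j. j < length k \<and> odd ((if j \<in> I then 1 else 0) + k ! j)}
           (\<lambda>idx. fourier_coeff k F (map x idx) (map2 (\<lambda>i kj. replicate kj (x i)) idx k))"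
proof -
  define A where "A = (\<lambda>idx. F (map x (take (length k) idx)) (group_by k (map x (drop (length k) idx))))"
  define It where "It = {j. j < length k \<and> odd ((if j \<in> I then 1 else 0) + k ! j)}"
  define FC where "FC = (\<lambda>idx. fourier_coeff k F (map x idx) (map2 (\<lambda>i kj. replicate kj (x i)) idx k))"
  define P where "P = (\<Prod>i<n. x i)"
  have key: "(\<Sum>\<pi>s\<in>permlists (sum_list k) n.
        (\<Prod>j<length k + sum_list k. if j \<in> I then of_int (sign ((\<rho>s @ \<pi>s) ! j)) else 1) *
        (\<Prod>v<n. A (map (\<lambda>\<sigma>. \<sigma> v) (\<rho>s @ \<pi>s))))
     = of_nat P ^ sum_list k * ((\<Prod>j<length k. if j \<in> It then of_int (sign (\<rho>s ! j)) else 1) *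
        (\<Prod>v<n. FC (map (\<lambda>\<sigma>. \<sigma> v) \<rho>s)))"
    if \<rho>s: "\<rho>s \<in> permlists (length k) n" for \<rho>s
  proof -
    have lr: "length \<rho>s = length k" and \<rho>p: "\<forall>\<rho>\<in>set \<rho>s. \<rho> permutes {..<n}"
      using \<rho>s unfolding permlists_conv[of "length k" n, symmetric] by auto
    define r where "r v = map (\<lambda>\<rho>. x (\<rho> v)) \<rho>s" for v
    define f where "f v ws = F (r v) (group_by k ws)" for v ws
    define as where "as = anch \<rho>s k"
    have las: "length as = sum_list k" using lr by (simp add: as_def length_anch)
    have asp: "\<forall>a\<in>set as. a permutes {..<n}" using set_anch[of \<rho>s k] \<rho>p unfolding as_def by blast
    have lrv: "length (r v) = length k" for v using lr by (simp add: r_def)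
    have rpos: "\<forall>a\<in>set (r v). a > 0" if v: "v < n" for v
    proof
      fix a assume "a \<in> set (r v)"
      then obtain \<rho> where "\<rho> \<in> set \<rho>s" "a = x (\<rho> v)" by (auto simp: r_def)
      moreover have "\<rho> permutes {..<n}" using \<rho>p calculation(1) by blast
      then have "\<rho> v < n" using permutes_in_image[of \<rho> "{..<n}" v] v by simp
      ultimately show "a > 0" using pos by simp
    qed
    have sgn: "(\<Prod>j<length k + sum_list k. if j \<in> I then of_int (sign ((\<rho>s @ \<pi>s) ! j)) else 1)
        = (\<Prod>j<length k. if j \<in> I then of_int (sign (\<rho>s ! j)) else 1) * (of_int (prod_list (map sign \<pi>s)) :: complex)"
      if \<pi>s: "\<pi>s \<in> permlists (sum_list k) n" for \<pi>s
    proof -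
      have l\<pi>: "length \<pi>s = sum_list k" using \<pi>s by (simp add: permlists_def lset_def)
      have a: "(\<Prod>j<length k. if j \<in> I then of_int (sign ((\<rho>s @ \<pi>s) ! j)) else 1)
          = (\<Prod>j<length k. if j \<in> I then of_int (sign (\<rho>s ! j)) else (1::complex))"
        using lr by (intro prod.cong refl) (simp add: nth_append)
      have b: "(\<Prod>i<sum_list k. if length k + i \<in> I then of_int (sign ((\<rho>s @ \<pi>s) ! (length k + i))) else 1)
          = (\<Prod>i<sum_list k. (of_int (sign (\<pi>s ! i)) :: complex))"
      proof (intro prod.cong refl)
        fix i assume "i \<in> {..<sum_list k}"
        then have "length k + i \<in> I" using I_sup by auto
        then show "(if length k + i \<in> I then of_int (sign ((\<rho>s @ \<pi>s) ! (length k + i))) else 1) = (of_int (sign (\<pi>s ! i)) :: complex)"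
          using lr by (simp add: nth_append)
      qed
      have c: "(\<Prod>i<sum_list k. (of_int (sign (\<pi>s ! i)) :: complex)) = of_int (prod_list (map sign \<pi>s))"
        using l\<pi> by (simp add: prod.list_conv_set_nth atLeast0LessThan)
      show ?thesis unfolding prod_add_split a b c ..
    qed
    have Aeq: "A (map (\<lambda>\<sigma>. \<sigma> v) (\<rho>s @ \<pi>s)) = f v (map (\<lambda>\<pi>. x (\<pi> v)) \<pi>s)" for v \<pi>s
      using lr by (simp add: A_def f_def r_def o_def)
    have evf: "\<forall>v<n. \<forall>ws. length ws = length as \<and> (\<forall>w\<in>set ws. w > 0) \<longrightarrow>
               f v ws = f v (map2 (\<lambda>w a. gcd w (x (a v))) ws as)"
    proof (intro allI impI)
      fix v and ws :: "nat list"
      assume v: "v < n" and ws: "length ws = length as \<and> (\<forall>w\<in>set ws. w > 0)"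
      have lws: "length ws = sum_list k" using ws las by simp
      have "group_by k (map2 (\<lambda>w a. gcd w (x (a v))) ws as)
          = map2 (\<lambda>\<rho> nj. map (\<lambda>w. gcd w (x (\<rho> v))) nj) \<rho>s (group_by k ws)"
        unfolding as_def by (rule gb_map2[OF lr lws])
      also have "\<dots> = map2 (\<lambda>rj nj. map (\<lambda>a. gcd a rj) nj) (r v) (group_by k ws)"
        by (simp add: r_def zip_map1 case_prod_beta)
      finally have g: "group_by k (map2 (\<lambda>w a. gcd w (x (a v))) ws as) = map2 (\<lambda>rj nj. map (\<lambda>a. gcd a rj) nj) (r v) (group_by k ws)" .
      have sh: "shaped k (group_by k ws)" by (rule shaped_gb[OF lws])
      have gp: "\<forall>g\<in>set (group_by k ws). \<forall>a\<in>set g. a > 0" using ws set_gb by blast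
      have "F (r v) (map2 (\<lambda>rj nj. map (\<lambda>a. gcd a rj) nj) (r v) (group_by k ws)) = F (r v) (group_by k ws)"
        using ev lrv rpos[OF v] sh gp unfolding even_mod_def by blast
      then show "f v ws = f v (map2 (\<lambda>w a. gcd w (x (a v))) ws as)"
        unfolding f_def g by simp
    qed
    have mc: "(\<Sum>\<pi>s\<in>permlists (length as) n. of_int (prod_list (map sign \<pi>s)) * (\<Prod>v<n. f v (map (\<lambda>\<pi>. x (\<pi> v)) \<pi>s)))
         = of_int (prod_list (map sign as)) * (\<Prod>v<n. mtopL (map (\<lambda>a. x (a v)) as) (f v))"
      by (rule multi_coord[OF inj pos fc asp evf])
    have mt: "mtopL (map (\<lambda>a. x (a v)) as) (f v) = of_nat (\<Prod>j<length k. r v ! j ^ (k ! j)) * FC (map (\<lambda>\<sigma>. \<sigma> v) \<rho>s)"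
      if v: "v < n" for v
    proof -
      have e1: "map (\<lambda>a. x (a v)) as = concat (map2 (\<lambda>rj kj. replicate kj rj) (r v) k)"
        unfolding as_def map_anch unfolding anch_conv r_def ..
      have e2: "FC (map (\<lambda>\<sigma>. \<sigma> v) \<rho>s) = fourier_coeff k F (r v) (map2 (\<lambda>rj kj. replicate kj rj) (r v) k)"
        by (simp add: FC_def r_def zip_map1 o_def split_def)
      have "f v = (\<lambda>ws. F (r v) (group_by k ws))" by (simp add: f_def fun_eq_iff)
      then show ?thesis
        unfolding e1 e2 using FC_link[OF lrv rpos[OF v], of "F (r v)"] FC_eq[OF lrv rpos[OF v], of F] by simp
    qed
    have pw: "(\<Prod>v<n. (of_nat (\<Prod>j<length k. r v ! j ^ (k ! j)) :: complex)) = of_nat P ^ sum_list k"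
    proof -
      have "(\<Prod>v<n. \<Prod>j<length k. r v ! j ^ (k ! j)) = (\<Prod>j<length k. \<Prod>v<n. x ((\<rho>s ! j) v) ^ (k ! j))"
        using lr by (subst prod.swap) (simp add: r_def)
      also have "\<dots> = (\<Prod>j<length k. P ^ (k ! j))"
      proof (intro prod.cong refl)
        fix j assume "j \<in> {..<length k}"
        then have p: "(\<rho>s ! j) permutes {..<n}" using \<rho>p lr by auto
        have "(\<Prod>v<n. x ((\<rho>s ! j) v)) = P"
          unfolding P_def using prod.permute[OF p, of x] by (simp add: o_def)
        then show "(\<Prod>v<n. x ((\<rho>s ! j) v) ^ (k ! j)) = P ^ (k ! j)"
          unfolding prod_power_distrib[symmetric] by simp
      qed
      also have "\<dots> = P ^ sum_list k"
        by (simp add: power_sum[symmetric] sum_list_sum_nth atLeast0LessThan)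
      finally show ?thesis by (simp flip: of_nat_prod)
    qed
    have sc: "(\<Prod>j<length k. if j \<in> I then of_int (sign (\<rho>s ! j)) else 1) * (of_int (prod_list (map sign as)) :: complex)
        = (\<Prod>j<length k. if j \<in> It then of_int (sign (\<rho>s ! j)) else 1)"
    proof -
      have "(\<Prod>j<length k. if j \<in> I then sign (\<rho>s ! j) else 1) * prod_list (map sign as)
          = (\<Prod>j<length k. (if j \<in> I then sign (\<rho>s ! j) else 1) * sign (\<rho>s ! j) ^ (k ! j))"
        unfolding as_def prod_sign_anch[OF lr] prod.distrib ..
      also have "\<dots> = (\<Prod>j<length k. if j \<in> It then sign (\<rho>s ! j) else 1)"
        by (intro prod.cong refl) (simp add: sign_combine[OF sign_pm] It_def)
      finally have "(\<Prod>j<length k. if j \<in> I then sign (\<rho>s ! j) else 1) * prod_list (map sign as)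
          = (\<Prod>j<length k. if j \<in> It then sign (\<rho>s ! j) else 1)" .
      then have "(of_int ((\<Prod>j<length k. if j \<in> I then sign (\<rho>s ! j) else 1) * prod_list (map sign as)) :: complex)
          = of_int (\<Prod>j<length k. if j \<in> It then sign (\<rho>s ! j) else 1)" by simp
      then show ?thesis by (simp add: of_int_prod if_distrib cong: if_cong)
    qed
    have "(\<Sum>\<pi>s\<in>permlists (sum_list k) n.
        (\<Prod>j<length k + sum_list k. if j \<in> I then of_int (sign ((\<rho>s @ \<pi>s) ! j)) else 1) *
        (\<Prod>v<n. A (map (\<lambda>\<sigma>. \<sigma> v) (\<rho>s @ \<pi>s))))
      = (\<Sum>\<pi>s\<in>permlists (sum_list k) n. (\<Prod>j<length k. if j \<in> I then of_int (sign (\<rho>s ! j)) else 1) *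
          (of_int (prod_list (map sign \<pi>s)) * (\<Prod>v<n. f v (map (\<lambda>\<pi>. x (\<pi> v)) \<pi>s))))"
      by (intro sum.cong refl) (simp only: sgn Aeq mult.assoc)
    also have "\<dots> = (\<Prod>j<length k. if j \<in> I then of_int (sign (\<rho>s ! j)) else 1) *
          (of_int (prod_list (map sign as)) * (\<Prod>v<n. mtopL (map (\<lambda>a. x (a v)) as) (f v)))"
      unfolding sum_distrib_left[symmetric] using mc las by simp
    also have "\<dots> = (\<Prod>j<length k. if j \<in> I then of_int (sign (\<rho>s ! j)) else 1) *
          (of_int (prod_list (map sign as)) * ((\<Prod>v<n. of_nat (\<Prod>j<length k. r v ! j ^ (k ! j))) * (\<Prod>v<n. FC (map (\<lambda>\<sigma>. \<sigma> v) \<rho>s))))"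
      by (simp add: mt prod.distrib del: of_nat_prod)
    also have "\<dots> = of_nat P ^ sum_list k * ((\<Prod>j<length k. if j \<in> It then of_int (sign (\<rho>s ! j)) else 1) *
        (\<Prod>v<n. FC (map (\<lambda>\<sigma>. \<sigma> v) \<rho>s)))"
      unfolding pw sc[symmetric] by (simp add: mult_ac)
    finally show ?thesis .
  qed
  have "hyperdet (length k + sum_list k) n I A
      = 1 / of_nat (fact n) * (\<Sum>\<rho>s\<in>permlists (length k) n. \<Sum>\<pi>s\<in>permlists (sum_list k) n.
        (\<Prod>j<length k + sum_list k. if j \<in> I then of_int (sign ((\<rho>s @ \<pi>s) ! j)) else 1) *
        (\<Prod>v<n. A (map (\<lambda>\<sigma>. \<sigma> v) (\<rho>s @ \<pi>s))))"
    unfolding hyperdet_def permlists_conv sum_permlists_add ..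
  also have "\<dots> = 1 / of_nat (fact n) * (\<Sum>\<rho>s\<in>permlists (length k) n. of_nat P ^ sum_list k *
       ((\<Prod>j<length k. if j \<in> It then of_int (sign (\<rho>s ! j)) else 1) * (\<Prod>v<n. FC (map (\<lambda>\<sigma>. \<sigma> v) \<rho>s))))"
    by (rule arg_cong[where f="\<lambda>z. 1 / of_nat (fact n) * z"], rule sum.cong[OF refl], rule key)
  also have "\<dots> = of_nat P ^ sum_list k * hyperdet (length k) n It FC"
    unfolding hyperdet_def permlists_conv sum_distrib_left[symmetric] by (simp only: mult_ac)
  finally show ?thesis unfolding A_def It_def FC_def P_def .
qed

end
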